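(* Let $n\ge2$ be an integer. Let $a_{k,j}$ ($0\le j\le k\le n$) be the coefficients of $p(k,x)=\sum_{j=0}^{k}a_{k,j}x^j$. Let $m=n-1$ if $n$ is odd and $m=n$ if $n$ is even. Define $\alpha_m,\alpha_{m-2},\dots,\alpha_0$ by $$\alpha_m=-\frac{4}{\pi}c_{n,m}a_{m,0},\qquad \alpha_{m-2i}=\frac{(m-2i+2)\alpha_{m-2i+2}}{2}-\frac{4}{\pi}c_{n,m-2i}a_{m-2i,0}\ \ \Big(i\in\{1,\dots,\tfrac m2-1\}\Big),\qquad \alpha_0=\alpha_2-\frac{4}{\pi}c_{n,0}a_{0,0},$$ and $\beta_{2n},\beta_{2n-2},\dots,\beta_0$ by $$\beta_{2n}=-\frac{2}{\pi}(-1)^n c_{n,n}a_{n,n},\qquad \beta_{2n-2i}=\frac{(n-i+1)\beta_{2n-2i+2}}{2}-\frac{2}{\pi}\sum_{k=n-i}^{\min\{2n-2i,\,n\}}(-1)^k c_{n,k}a_{k,2(n-i)-k}\ \ (i\in\{1,\dots,n-1\}),$$ $$\beta_0=\frac{\beta_2}{2}-\frac{2}{\pi}c_{n,0}a_{0,0}.$$ Set $p_{n,1}(x)=\alpha_0+\alpha_2x^2+\dots+\alpha_mx^m$, $p_{n,2}(x)=\beta_0+\beta_2x^2+\dots+\beta_{2n}x^{2n}$, $p_{n,0}=-(\alpha_0+\beta_0)$, and for $x\ge0$ $$f_n(x)=\sqrt{p_{n,0}+p_{n,1}(x)e^{-x^2}+p_{n,2}(x)e^{-2x^2}}.$$ Then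 $\lim_{n\to\infty}f_n(x)=\operatorname{erf}(x)$ for $x\ge0$, and the convergence is uniform on $[0,\infty)$.
   Context: $\operatorname{erf}(x)=\frac{2}{\sqrt{\pi}}\int_0^x e^{-\lambda^2}\,d\lambda$. For integers $0\le k\le n$, $c_{n,k}=\frac{n!}{(n-k)!\,(k+1)!}\cdot\frac{(2n+1-k)!}{2\,(2n+1)!}$. The polynomials $p(k,x)$ are defined recursively by $p(0,x)=1$ and $p(k,x)=\frac{d}{dx}p(k-1,x)-2x\,p(k-1,x)$ for $k\ge1$. *)

theory Defs
  imports "HOL-Analysis.Analysis" "HOL-Computational_Algebra.Polynomial"
begin

definition erf :: "real \<Rightarrow> real" where
  "erf x = 2 / sqrt pi * integral {0..x} (\<lambda>t. exp (- (t\<^sup>2)))"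

definition cc :: "nat \<Rightarrow> nat \<Rightarrow> real" where
  "cc n k = fact n / (fact (n - k) * fact (k + 1)) * (fact (2*n + 1 - k) / (2 * fact (2*n + 1)))"

fun pp :: "nat \<Rightarrow> real poly" where
  "pp 0 = 1"
| "pp (Suc k) = pderiv (pp k) - [:0, 2:] * pp k"

definition aa :: "nat \<Rightarrow> nat \<Rightarrow> real" where
  "aa k j = coeff (pp k) j"

definition mm :: "nat \<Rightarrow> nat" where
  "mm n = (if odd n then n - 1 else n)"

text \<open>alpha_aux n d = alpha_{m - 2d}, for d = 0 .. m/2\<close>
fun alpha_aux :: "nat \<Rightarrow> nat \<Rightarrow> real" where
  "alpha_aux n 0 = - 4 / pi * cc n (mm n) * aa (mm n) 0"
| "alpha_aux n (Suc d) =
     (if Suc d = mm n div 2 then alpha_aux n d - 4 / pi * cc n 0 * aa 0 0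
      else real (mm n - 2 * Suc d + 2) * alpha_aux n d / 2
           - 4 / pi * cc n (mm n - 2 * Suc d) * aa (mm n - 2 * Suc d) 0)"

text \<open>beta_aux n i = beta_{2n - 2i}, for i = 0 .. n\<close>
fun beta_aux :: "nat \<Rightarrow> nat \<Rightarrow> real" where
  "beta_aux n 0 = - 2 / pi * (-1) ^ n * cc n n * aa n n"
| "beta_aux n (Suc i) =
     (if Suc i = n then beta_aux n i / 2 - 2 / pi * cc n 0 * aa 0 0
      else real (n - Suc i + 1) * beta_aux n i / 2
           - 2 / pi * (\<Sum>k = n - Suc i .. min (2*n - 2 * Suc i) n.
                         (-1) ^ k * cc n k * aa k (2 * (n - Suc i) - k)))"

definition alpha :: "nat \<Rightarrow> nat \<Rightarrow> real" where
  "alpha n j = alpha_aux n ((mm n - j) div 2)"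

definition beta :: "nat \<Rightarrow> nat \<Rightarrow> real" where
  "beta n j = beta_aux n ((2*n - j) div 2)"

definition pn1 :: "nat \<Rightarrow> real \<Rightarrow> real" where
  "pn1 n x = (\<Sum>i = 0 .. mm n div 2. alpha n (2*i) * x ^ (2*i))"

definition pn2 :: "nat \<Rightarrow> real \<Rightarrow> real" where
  "pn2 n x = (\<Sum>i = 0 .. n. beta n (2*i) * x ^ (2*i))"

definition pn0 :: "nat \<Rightarrow> real" where
  "pn0 n = - (alpha n 0 + beta n 0)"

definition f_n :: "nat \<Rightarrow> real \<Rightarrow> real" where
  "f_n n x = sqrt (pn0 n + pn1 n x * exp (- (x\<^sup>2)) + pn2 n x * exp (- 2 * x\<^sup>2))"

end

theory Submission
  imports Defs "HOL-Complex_Analysis.Complex_Analysis"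
begin

lemma coeff_pp_zero: "k < j \<or> odd (k + j) \<Longrightarrow> coeff (pp k) j = 0"
proof (induction k arbitrary: j)
  case 0
  then show ?case by (cases j) auto
next
  case (Suc k)
  have "coeff (pp (Suc k)) j = of_nat (Suc j) * coeff (pp k) (Suc j) - coeff ([:0,2:] * pp k) j"
    by (simp add: coeff_pderiv)
  also have "coeff ([:0,2:] * pp k) j = (if j = 0 then 0 else 2 * coeff (pp k) (j - 1))"
    by (cases j) (auto simp: coeff_pCons)
  finally have eq: "coeff (pp (Suc k)) j = of_nat (Suc j) * coeff (pp k) (Suc j) - (if j = 0 then 0 else 2 * coeff (pp k) (j - 1))" .
  have "coeff (pp k) (Suc j) = 0" using Suc.prems by (intro Suc.IH) auto
  moreover have "j \<noteq> 0 \<Longrightarrow> coeff (pp k) (j - 1) = 0" using Suc.prems by (intro Suc.IH) auto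
  ultimately show ?case using eq by auto
qed

lemma degree_pp: "degree (pp k) \<le> k"
  by (rule degree_le) (auto intro: coeff_pp_zero)

lemma aa00: "aa 0 0 = 1" by (simp add: aa_def)

lemma poly_sum_le: 
  fixes p :: "real poly"
  assumes "degree p \<le> N" shows "poly p x = (\<Sum>j\<le>N. coeff p j * x ^ j)"
proof -
  have "poly p x = (\<Sum>j\<le>degree p. coeff p j * x ^ j)" by (rule poly_altdef)
  also have "\<dots> = (\<Sum>j\<le>N. coeff p j * x ^ j)"
    by (rule sum.mono_neutral_left) (use assms in \<open>auto simp: coeff_eq_0\<close>)
  finally show ?thesis .
qed

lemma even_sum: 
  fixes f :: "nat \<Rightarrow> real"
  assumes "\<And>k. odd k \<Longrightarrow> f k = (0::real)"
  shows "(\<Sum>k\<le>n. f k) = (\<Sum>i\<le>n div 2. f (2*i))"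
proof (induction n)
  case 0 then show ?case by simp
next
  case (Suc n)
  show ?case
  proof (cases "odd (Suc n)")
    case True
    then have "Suc n div 2 = n div 2" by presburger
    then show ?thesis using Suc True assms by simp
  next
    case False
    then have "Suc n div 2 = Suc (n div 2)" "2 * Suc (n div 2) = Suc n" by presburger+
    then show ?thesis using Suc by simp
  qed
qed

lemma tele_sum:
  fixes a :: "nat \<Rightarrow> real"
  shows "(\<Sum>i\<le>M. a i * (real (2*i) * s ^ (2*i - 1) - c * s ^ (2*i+1)))
       = (\<Sum>i<M. ((2*real i+2) * a (Suc i) - c * a i) * s ^ (2*i+1)) - c * a M * s ^ (2*M+1)"
proof (induction M)
  case 0 then show ?case by simp
next
  case (Suc M)
  have e: "2 * Suc M - 1 = 2*M+1" by simp
  show ?case using Suc by (simp add: e algebra_simps)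
qed


lemma mm_eq: "mm n = 2 * (n div 2)" by (simp add: mm_def)

lemma alpha_eq: "i \<le> n div 2 \<Longrightarrow> alpha n (2*i) = alpha_aux n (n div 2 - i)"
proof -
  have "2 * (n div 2) - 2 * i = 2 * (n div 2 - i)" by simp
  then show ?thesis unfolding alpha_def mm_eq by simp
qed

lemma alpha_step:
  assumes "i < n div 2"
  shows "(2*real i+2) * alpha n (2*Suc i) - 2 * alpha n (2*i) = 8/pi * cc n (2*i) * aa (2*i) 0"
proof -
  define M where "M = n div 2"
  define d where "d = M - Suc i"
  have i: "i < M" using assms M_def by simp
  have a1: "alpha n (2*Suc i) = alpha_aux n d" using alpha_eq[of "Suc i" n] i M_def d_def by simp
  have a0: "alpha n (2*i) = alpha_aux n (Suc d)" using alpha_eq[of i n] i M_def d_def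
    by (simp add: Suc_diff_Suc)
  have sd: "Suc d = M - i" using i d_def by simp
  have m: "mm n - 2 * Suc d = 2*i" unfolding sd mm_eq M_def[symmetric] using i by simp
  show ?thesis
  proof (cases "Suc d = mm n div 2")
    case True
    then have "i = 0" using i unfolding mm_eq M_def[symmetric] d_def by simp
    have "alpha_aux n (Suc d) = alpha_aux n d - 4/pi*cc n 0 * aa 0 0"
      by (subst alpha_aux.simps(2)) (simp add: True)
    then have "alpha n (2*i) = alpha n (2*Suc i) - 4/pi*cc n 0 * aa 0 0" using a0 a1 by simp
    moreover have "8/pi * cc n 0 = 2 * (4/pi*cc n 0)" by simp
    ultimately show ?thesis using \<open>i=0\<close> aa00 by simp
  next
    case False
    have "alpha n (2*i) = real (2*i + 2) * alpha n (2*Suc i) / 2 - 4/pi*cc n (2*i) * aa (2*i) 0"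
    proof -
      have "alpha_aux n (Suc d) = real (mm n - 2 * Suc d + 2) * alpha_aux n d / 2
           - 4 / pi * cc n (mm n - 2 * Suc d) * aa (mm n - 2 * Suc d) 0"
        by (subst alpha_aux.simps(2)) (simp only: False if_False)
      then show ?thesis using a0 a1 m by simp
    qed
    then show ?thesis by (simp add: algebra_simps)
  qed
qed

lemma alpha_top: "- 2 * alpha n (2*(n div 2)) = 8/pi * cc n (2*(n div 2)) * aa (2*(n div 2)) 0"
  using alpha_eq[of "n div 2" n] by (simp add: mm_eq)

lemma alpha_ident:
  "(\<Sum>i\<le>n div 2. alpha n (2*i) * (real (2*i) * s^(2*i-1) - 2 * s^(2*i+1)))
     = 8/pi * (\<Sum>k\<le>n. cc n k * aa k 0 * s^(k+1))"
proof -
  define M where "M = n div 2"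
  have "(\<Sum>i\<le>M. alpha n (2*i) * (real (2*i) * s^(2*i-1) - 2 * s^(2*i+1)))
      = (\<Sum>i<M. ((2*real i+2) * alpha n (2*Suc i) - 2 * alpha n (2*i)) * s ^ (2*i+1)) - 2 * alpha n (2*M) * s ^ (2*M+1)"
    using tele_sum[where a="\<lambda>i. alpha n (2*i)" and M=M and s=s and c=2] by (simp add: add.commute)
  also have "\<dots> = (\<Sum>i<M. 8/pi * cc n (2*i) * aa (2*i) 0 * s ^ (2*i+1)) + 8/pi * cc n (2*M) * aa (2*M) 0 * s ^ (2*M+1)"
  proof -
    have "(\<Sum>i<M. ((2*real i+2) * alpha n (2*Suc i) - 2 * alpha n (2*i)) * s ^ (2*i+1))
        = (\<Sum>i<M. 8/pi * cc n (2*i) * aa (2*i) 0 * s ^ (2*i+1))"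
    proof (rule sum.cong[OF refl])
      fix i assume "i \<in> {..<M}"
      then have "(2*real i+2) * alpha n (2*Suc i) - 2 * alpha n (2*i) = 8/pi * cc n (2*i) * aa (2*i) 0"
        using \<open>i \<in> {..<M}\<close> M_def by (intro alpha_step) simp
      then show "((2*real i+2) * alpha n (2*Suc i) - 2 * alpha n (2*i)) * s ^ (2*i+1) = 8/pi * cc n (2*i) * aa (2*i) 0 * s ^ (2*i+1)"
        by (simp only:)
    qed
    moreover have "2 * alpha n (2*M) * s ^ (2*M+1) = - (8/pi * cc n (2*M) * aa (2*M) 0) * s ^ (2*M+1)"
    proof -
      have t: "2 * alpha n (2*M) = - (8/pi * cc n (2*M) * aa (2*M) 0)"
        using alpha_top[of n] unfolding M_def[symmetric] by linarith
      show ?thesis by (simp only: t)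
    qed
    ultimately show ?thesis by simp
  qed
  also have "\<dots> = (\<Sum>i\<le>M. 8/pi * cc n (2*i) * aa (2*i) 0 * s ^ (2*i+1))"
    by (simp add: lessThan_Suc_atMost[symmetric])
  also have "\<dots> = 8/pi * (\<Sum>i\<le>M. cc n (2*i) * aa (2*i) 0 * s ^ (2*i+1))"
    by (simp add: sum_distrib_left mult.assoc)
  also have "(\<Sum>i\<le>M. cc n (2*i) * aa (2*i) 0 * s ^ (2*i+1)) = (\<Sum>k\<le>n. cc n k * aa k 0 * s^(k+1))"
    unfolding M_def by (rule even_sum[symmetric]) (simp add: aa_def coeff_pp_zero)
  finally show ?thesis unfolding M_def .
qed


definition SS :: "nat \<Rightarrow> nat \<Rightarrow> real" where
  "SS n i = (\<Sum>k = i..min (2*i) n. (-1)^k * cc n k * aa k (2*i - k))"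

lemma beta_eq: "i \<le> n \<Longrightarrow> beta n (2*i) = beta_aux n (n - i)"
proof -
  have "2 * n - 2 * i = 2 * (n - i)" by simp
  then show ?thesis unfolding beta_def by simp
qed

lemma beta_step:
  assumes i: "i < n"
  shows "(2*real i+2) * beta n (2*Suc i) - 4 * beta n (2*i) = 8/pi * SS n i"
proof -
  define d where "d = n - Suc i"
  have a1: "beta n (2*Suc i) = beta_aux n d" using beta_eq[of "Suc i" n] i d_def by simp
  have a0: "beta n (2*i) = beta_aux n (Suc d)" using beta_eq[of i n] i d_def
    by (simp add: Suc_diff_Suc)
  have sd: "Suc d = n - i" using i d_def by simp
  show ?thesis
  proof (cases "Suc d = n")
    case True
    then have "i = 0" using i unfolding d_def by simp
    have "beta_aux n (Suc d) = beta_aux n d / 2 - 2/pi*cc n 0 * aa 0 0"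
      by (subst beta_aux.simps(2)) (simp add: True)
    then have "beta n (2*i) = beta n (2*Suc i) / 2 - 2/pi*cc n 0 * aa 0 0" using a0 a1 by simp
    moreover have "8/pi * cc n 0 = 4 * (2/pi*cc n 0)" by simp
    moreover have "SS n 0 = cc n 0" by (simp add: SS_def aa00)
    ultimately show ?thesis using \<open>i=0\<close> aa00 by simp
  next
    case False
    have e1: "n - Suc d = i" "2*n - 2 * Suc d = 2*i" "2 * (n - Suc d) = 2*i" using sd i by auto
    have "beta_aux n (Suc d) = real (n - Suc d + 1) * beta_aux n d / 2
           - 2 / pi * (\<Sum>k = n - Suc d .. min (2*n - 2 * Suc d) n.
                         (-1) ^ k * cc n k * aa k (2 * (n - Suc d) - k))"
      by (subst beta_aux.simps(2)) (simp only: False if_False)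
    then have h: "beta n (2*i) = real (i + 1) * beta n (2*Suc i) / 2 - 2/pi * SS n i"
      using a0 a1 unfolding e1 SS_def by simp
    show ?thesis unfolding h by (simp add: field_simps)
  qed
qed

lemma beta_top: "- 4 * beta n (2*n) = 8/pi * SS n n"
  using beta_eq[of n n] by (simp add: SS_def)

lemma beta_ident:
  "(\<Sum>i\<le>n. beta n (2*i) * (real (2*i) * s^(2*i-1) - 4 * s^(2*i+1)))
     = 8/pi * (\<Sum>i\<le>n. SS n i * s^(2*i+1))"
proof -
  have "(\<Sum>i\<le>n. beta n (2*i) * (real (2*i) * s^(2*i-1) - 4 * s^(2*i+1)))
      = (\<Sum>i<n. ((2*real i+2) * beta n (2*Suc i) - 4 * beta n (2*i)) * s ^ (2*i+1)) - 4 * beta n (2*n) * s ^ (2*n+1)"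
    using tele_sum[where a="\<lambda>i. beta n (2*i)" and M=n and s=s and c=4] by simp
  also have "\<dots> = (\<Sum>i<n. 8/pi * SS n i * s ^ (2*i+1)) + 8/pi * SS n n * s ^ (2*n+1)"
  proof -
    have "(\<Sum>i<n. ((2*real i+2) * beta n (2*Suc i) - 4 * beta n (2*i)) * s ^ (2*i+1))
        = (\<Sum>i<n. 8/pi * SS n i * s ^ (2*i+1))"
    proof (rule sum.cong[OF refl])
      fix i assume "i \<in> {..<n}"
      then have "(2*real i+2) * beta n (2*Suc i) - 4 * beta n (2*i) = 8/pi * SS n i"
        by (intro beta_step) simp
      then show "((2*real i+2) * beta n (2*Suc i) - 4 * beta n (2*i)) * s ^ (2*i+1) = 8/pi * SS n i * s ^ (2*i+1)"
        by (simp only:)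
    qed
    moreover have "4 * beta n (2*n) * s ^ (2*n+1) = - (8/pi * SS n n) * s ^ (2*n+1)"
    proof -
      have t: "4 * beta n (2*n) = - (8/pi * SS n n)"
        using beta_top[of n] by linarith
      show ?thesis by (simp only: t)
    qed
    ultimately show ?thesis by simp
  qed
  also have "\<dots> = (\<Sum>i\<le>n. 8/pi * SS n i * s ^ (2*i+1))"
    by (simp add: lessThan_Suc_atMost[symmetric])
  also have "\<dots> = 8/pi * (\<Sum>i\<le>n. SS n i * s ^ (2*i+1))"
    by (simp add: sum_distrib_left mult.assoc)
  finally show ?thesis .
qed

lemma inner_sum:
  assumes k: "k \<le> n"
  shows "(\<Sum>i\<in>{i. i \<in> {..n} \<and> i \<le> k \<and> k \<le> 2*i}. aa k (2*i - k) * s^(2*i+1))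
       = s^(k+1) * poly (pp k) s"
proof -
  have "s^(k+1) * poly (pp k) s = (\<Sum>j\<le>k. aa k j * s^(k+1+j))"
    unfolding poly_sum_le[OF degree_pp] sum_distrib_left aa_def
    by (intro sum.cong refl) (simp add: power_add algebra_simps)
  also have "\<dots> = (\<Sum>j\<in>{j. j \<le> k \<and> even (k+j)}. aa k j * s^(k+1+j))"
    by (rule sum.mono_neutral_right) (auto simp: aa_def coeff_pp_zero)
  also have "\<dots> = (\<Sum>i\<in>{i. i \<in> {..n} \<and> i \<le> k \<and> k \<le> 2*i}. aa k (2*i - k) * s^(2*i+1))"
  proof (rule sum.reindex_bij_witness[where i="\<lambda>i. 2*i - k" and j="\<lambda>j. (k+j) div 2"])
    fix j assume "j \<in> {j. j \<le> k \<and> even (k+j)}"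
    then show "2 * ((k+j) div 2) - k = j" "(k+j) div 2 \<in> {i. i \<in> {..n} \<and> i \<le> k \<and> k \<le> 2*i}"
      "aa k (2 * ((k + j) div 2) - k) * s ^ (2 * ((k + j) div 2) + 1) = aa k j * s ^ (k + 1 + j)"
      using k by auto
  next
    fix i assume "i \<in> {i. i \<in> {..n} \<and> i \<le> k \<and> k \<le> 2*i}"
    then show "(k + (2*i - k)) div 2 = i" "2*i - k \<in> {j. j \<le> k \<and> even (k+j)}" by auto
  qed
  finally show ?thesis by simp
qed

lemma SS_swap:
  "(\<Sum>i\<le>n. SS n i * s^(2*i+1)) = (\<Sum>k\<le>n. cc n k * (-1)^k * s^(k+1) * poly (pp k) s)"
proof -
  have "(\<Sum>i\<le>n. SS n i * s^(2*i+1))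
     = (\<Sum>i\<le>n. \<Sum>k\<in>{k. k \<in> {..n} \<and> i \<le> k \<and> k \<le> 2*i}. (-1)^k * cc n k * aa k (2*i - k) * s^(2*i+1))"
  proof (rule sum.cong[OF refl])
    fix i assume "i \<in> {..n}"
    have "{i..min (2*i) n} = {k. k \<in> {..n} \<and> i \<le> k \<and> k \<le> 2*i}" by auto
    then show "SS n i * s ^ (2 * i + 1) = (\<Sum>k\<in>{k. k \<in> {..n} \<and> i \<le> k \<and> k \<le> 2*i}. (-1)^k * cc n k * aa k (2*i - k) * s^(2*i+1))"
      unfolding SS_def sum_distrib_right by simp
  qed
  also have "\<dots> = (\<Sum>k\<le>n. \<Sum>i\<in>{i. i \<in> {..n} \<and> i \<le> k \<and> k \<le> 2*i}. (-1)^k * cc n k * aa k (2*i - k) * s^(2*i+1))"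
    by (rule sum.swap_restrict) auto
  also have "\<dots> = (\<Sum>k\<le>n. cc n k * (-1)^k * s^(k+1) * poly (pp k) s)"
  proof (rule sum.cong[OF refl])
    fix k assume "k \<in> {..n}"
    then have "(\<Sum>i\<in>{i. i \<in> {..n} \<and> i \<le> k \<and> k \<le> 2*i}. (-1)^k * cc n k * (aa k (2*i - k) * s^(2*i+1)))
        = (-1)^k * cc n k * (s^(k+1) * poly (pp k) s)"
      using inner_sum[of k n s] by (simp add: sum_distrib_left[symmetric])
    then show "(\<Sum>i\<in>{i. i \<in> {..n} \<and> i \<le> k \<and> k \<le> 2*i}. (-1)^k * cc n k * aa k (2*i - k) * s^(2*i+1))
        = cc n k * (-1)^k * s^(k+1) * poly (pp k) s"
      by (simp add: mult.assoc mult.left_commute)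
  qed
  finally show ?thesis .
qed


definition inner :: "nat \<Rightarrow> real \<Rightarrow> real" where
  "inner n x = pn0 n + pn1 n x * exp (- (x\<^sup>2)) + pn2 n x * exp (- 2 * x\<^sup>2)"

definition Qn :: "nat \<Rightarrow> real \<Rightarrow> real" where
  "Qn n s = (\<Sum>k\<le>n. cc n k * s^(k+1) * (aa k 0 + (-1)^k * poly (pp k) s * exp (-(s\<^sup>2))))"

lemma mm_div: "mm n div 2 = n div 2" by (simp add: mm_eq)

lemma DERIV_pow2: "((\<lambda>x::real. x ^ (2*i)) has_real_derivative real (2*i) * s ^ (2*i-1)) (at s)"
  using DERIV_pow[of "2*i" s] by simp

lemma pn1_deriv: "((\<lambda>x. pn1 n x) has_real_derivative (\<Sum>i\<le>n div 2. alpha n (2*i) * (real (2*i) * s^(2*i-1)))) (at s)"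
  unfolding pn1_def mm_div atLeast0AtMost
  by (intro DERIV_sum DERIV_cmult DERIV_pow2)

lemma pn2_deriv: "((\<lambda>x. pn2 n x) has_real_derivative (\<Sum>i\<le>n. beta n (2*i) * (real (2*i) * s^(2*i-1)))) (at s)"
  unfolding pn2_def atLeast0AtMost
  by (intro DERIV_sum DERIV_cmult DERIV_pow2)

lemma inner_deriv: "(inner n has_real_derivative (8/pi * exp(-(s\<^sup>2)) * Qn n s)) (at s)"
proof -
  define e where "e = exp (-(s\<^sup>2))"
  define e2 where "e2 = exp (- 2 * s\<^sup>2)"
  define A where "A = (\<Sum>i\<le>n div 2. alpha n (2*i) * (real (2*i) * s^(2*i-1)))"
  define B where "B = (\<Sum>i\<le>n. beta n (2*i) * (real (2*i) * s^(2*i-1)))"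
  have "(inner n has_real_derivative
     (A * e + pn1 n s * (e * (- 2 * s)) + (B * e2 + pn2 n s * (e2 * (- 4 * s))))) (at s)"
    unfolding inner_def[abs_def] A_def B_def e_def e2_def
    by (auto intro!: derivative_eq_intros pn1_deriv pn2_deriv)
  moreover have "A * e + pn1 n s * (e * (- 2 * s)) + (B * e2 + pn2 n s * (e2 * (- 4 * s)))
     = 8/pi * exp(-(s\<^sup>2)) * Qn n s"
  proof -
    have pA: "A - 2* s * pn1 n s = (\<Sum>i\<le>n div 2. alpha n (2*i) * (real (2*i) * s^(2*i-1) - 2 * s^(2*i+1)))"
      unfolding A_def pn1_def mm_div atLeast0AtMost sum_distrib_left sum_subtractf[symmetric]
      by (intro sum.cong refl) (simp add: algebra_simps)
    have pB: "B - 4* s * pn2 n s = (\<Sum>i\<le>n. beta n (2*i) * (real (2*i) * s^(2*i-1) - 4 * s^(2*i+1)))"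
      unfolding B_def pn2_def atLeast0AtMost sum_distrib_left sum_subtractf[symmetric]
      by (intro sum.cong refl) (simp add: algebra_simps)
    have ee: "e2 = e * e" unfolding e_def e2_def by (simp add: exp_add[symmetric])
    have "A * e + pn1 n s * (e * (- 2 * s)) + (B * e2 + pn2 n s * (e2 * (- 4 * s)))
        = e * (A - 2* s * pn1 n s) + e2 * (B - 4* s * pn2 n s)" by (simp add: algebra_simps)
    also have "\<dots> = e * (8/pi * (\<Sum>k\<le>n. cc n k * aa k 0 * s^(k+1)))
                  + e2 * (8/pi * (\<Sum>k\<le>n. cc n k * (-1)^k * s^(k+1) * poly (pp k) s))"
      unfolding pA pB alpha_ident beta_ident SS_swap ..
    also have "\<dots> = 8/pi * e * Qn n s"
      unfolding Qn_def ee e_def[symmetric] sum_distrib_left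
      by (simp add: sum.distrib[symmetric] algebra_simps)
    finally show ?thesis unfolding e_def .
  qed
  ultimately show ?thesis by simp
qed

lemma pn1_0: "pn1 n 0 = alpha n 0"
  unfolding pn1_def by (subst sum.atLeast_Suc_atMost) (auto simp: power_0_left)

lemma pn2_0: "pn2 n 0 = beta n 0"
  unfolding pn2_def by (subst sum.atLeast_Suc_atMost) (auto simp: power_0_left)

lemma inner_0: "inner n 0 = 0"
  unfolding inner_def pn1_0 pn2_0 pn0_def by simp


definition PP :: "real \<Rightarrow> nat \<Rightarrow> real poly" where
  "PP s n = monom 1 (Suc n) * [:-s,1:]^(Suc n)"

definition gg :: "nat \<Rightarrow> real \<Rightarrow> real" where
  "gg i t = poly (pp i) t * exp (-(t\<^sup>2))"

definition HH :: "nat \<Rightarrow> real \<Rightarrow> real \<Rightarrow> real" where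
  "HH n s t = (\<Sum>j<2*Suc n. (-1)^j * (poly ((pderiv^^j) (PP s n)) t * gg (2*Suc n - 1 - j) t))"

lemma gg_deriv: "(gg i has_real_derivative gg (Suc i) t) (at t)"
proof -
  have "(gg i has_real_derivative poly (pderiv (pp i)) t * exp (-(t\<^sup>2)) + poly (pp i) t * (exp (-(t\<^sup>2)) * (- 2 * t))) (at t)"
    unfolding gg_def[abs_def] by (auto intro!: derivative_eq_intros)
  moreover have "poly (pderiv (pp i)) t * exp (-(t\<^sup>2)) + poly (pp i) t * (exp (-(t\<^sup>2)) * (- 2 * t)) = gg (Suc i) t"
    unfolding gg_def by (simp add: algebra_simps)
  ultimately show ?thesis by simp
qed

lemma hpd_deriv: "((\<lambda>t. poly ((pderiv^^j) p) t) has_real_derivative poly ((pderiv^^Suc j) p) t) (at t)"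
  by simp

lemma gg_0: "gg i 0 = aa i 0"
  by (simp add: gg_def aa_def poly_0_coeff_0)

lemma degree_PP: "degree (PP s n) = 2 * Suc n"
proof -
  have d1: "degree (monom 1 (Suc n) :: real poly) = Suc n" by (simp add: degree_monom_eq)
  have d2: "degree ([:-s,1:]^(Suc n)) = Suc n" by (rule degree_linear_power)
  have n1: "(monom 1 (Suc n) :: real poly) \<noteq> 0" by simp
  have n2: "[:-s,1:]^(Suc n) \<noteq> 0" using d2 by (metis degree_0 nat.simps(3))
  show ?thesis unfolding PP_def degree_mult_eq[OF n1 n2] d1 d2 by simp
qed

lemma coeff_PP: "coeff (PP s n) j = (if j < Suc n then 0 else coeff ([:-s,1:]^(Suc n)) (j - Suc n))"
  unfolding PP_def coeff_monom_mult by simp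

lemma poly_hpd_0: "poly ((pderiv^^j) p) 0 = fact j * coeff p (j::nat)"
  unfolding poly_0_coeff_0 coeff_higher_pderiv by (simp add: pochhammer_fact)

lemma pcompose_pow: "pcompose (p^k) q = (pcompose p q)^k"
  by (induction k) (simp_all add: pcompose_1 pcompose_mult)

lemma hpd_pcompose: "(pderiv^^j) (pcompose p [:s,1:]) = pcompose ((pderiv^^j) p) [:s,1::real:]"
  by (induction j) (simp_all add: pderiv_pcompose pderiv_pCons)

lemma poly_hpd_s: fixes p :: "real poly" shows "poly ((pderiv^^j) p) s = fact j * coeff (pcompose p [:s,1:]) (j::nat)"
proof -
  have "poly ((pderiv^^j) p) s = poly (pcompose ((pderiv^^j) p) [:s,1:]) 0"
    by (simp add: poly_pcompose)
  also have "\<dots> = fact j * coeff (pcompose p [:s,1:]) j"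
    using poly_hpd_0[of j "pcompose p [:s,1:]"] hpd_pcompose[of j p s] by simp
  finally show ?thesis .
qed

lemma PP_shift: "pcompose (PP s n) [:s,1:] = monom 1 (Suc n) * [:s,1:]^(Suc n)"
proof -
  have "pcompose (monom 1 (Suc n)) [:s,1:] = [:s,1:]^(Suc n)"
    unfolding monom_altdef by (simp add: pcompose_pow pcompose_pCons)
  moreover have "pcompose ([:-s,1:]^(Suc n)) [:s,1:] = monom 1 (Suc n)"
    unfolding monom_altdef pcompose_pow by (simp add: pcompose_pCons)
  ultimately show ?thesis unfolding PP_def pcompose_mult by (simp add: mult.commute)
qed

lemma poly_top: "poly ((pderiv^^(2*Suc n)) (PP s n)) t = fact (2*Suc n)"
proof -
  let ?d = "(pderiv^^(2*Suc n)) (PP s n)"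
  have "degree ?d = 0" unfolding degree_higher_pderiv degree_PP by simp
  then have "?d = [:coeff ?d 0:]" by (simp add: degree_0_id)
  moreover have "poly [:coeff ?d 0:] t = coeff ?d 0" by simp
  ultimately have "poly ?d t = coeff ?d 0" by metis
  also have "\<dots> = fact (2*Suc n) * coeff (PP s n) (2*Suc n)"
    using poly_hpd_0[of "2*Suc n" "PP s n"] poly_0_coeff_0 by metis
  also have "coeff (PP s n) (2*Suc n) = 1"
    unfolding coeff_PP by (simp del: power_Suc add: coeff_linear_power)
  finally show ?thesis by simp
qed

lemma HH_deriv: "(HH n s has_real_derivative (poly (PP s n) t * gg (2*Suc n) t - fact (2*Suc n) * gg 0 t)) (at t)"
proof -
  define K where "K = 2 * Suc n"
  define u where "u j = (-1)^j * (poly ((pderiv^^j) (PP s n)) t * gg (K - j) t)" for j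
  have D: "(HH n s has_real_derivative
      (\<Sum>j<K. (-1)^j * (poly ((pderiv^^Suc j) (PP s n)) t * gg (K - 1 - j) t
                       + gg (Suc (K - 1 - j)) t * poly ((pderiv^^j) (PP s n)) t))) (at t)"
    unfolding HH_def[abs_def] K_def[symmetric]
    by (intro DERIV_sum DERIV_cmult DERIV_mult hpd_deriv gg_deriv)
  have E1: "(\<Sum>j<K. (-1)^j * (poly ((pderiv^^Suc j) (PP s n)) t * gg (K - 1 - j) t
                       + gg (Suc (K - 1 - j)) t * poly ((pderiv^^j) (PP s n)) t))
     = (\<Sum>j<K. u j - u (Suc j))"
  proof (rule sum.cong[OF refl])
    fix j assume "j \<in> {..<K}"
    then have "Suc (K - 1 - j) = K - j" "K - 1 - j = K - Suc j" by auto
    then show "(-1)^j * (poly ((pderiv^^Suc j) (PP s n)) t * gg (K - 1 - j) t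
                       + gg (Suc (K - 1 - j)) t * poly ((pderiv^^j) (PP s n)) t) = u j - u (Suc j)"
      unfolding u_def by (simp add: algebra_simps)
  qed
  have E2: "(\<Sum>j<K. u j - u (Suc j)) = u 0 - u K" by (rule sum_lessThan_telescope')
  have U0: "u 0 = poly (PP s n) t * gg K t" unfolding u_def by simp
  have UK: "u K = fact K * gg 0 t" unfolding u_def K_def poly_top by simp
  have "(HH n s has_real_derivative (u 0 - u K)) (at t)" using D unfolding E1 E2 .
  then show ?thesis unfolding U0 UK by (simp only: K_def)
qed

lemma minus_one_pow_diff: "k \<le> m \<Longrightarrow> (-1::real)^(m - k) = (-1)^m * (-1)^k"
proof -
  assume "k \<le> m"
  then have "(-1::real)^m = (-1)^(m-k) * (-1)^k" by (simp add: power_add[symmetric])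
  then have "(-1::real)^m * (-1)^k = (-1)^(m-k) * ((-1)^k * (-1)^k)" by simp
  also have "(-1::real)^k * (-1)^k = 1" by (simp add: power_add[symmetric] flip: power_mult_distrib)
  finally show ?thesis by simp
qed

lemma cc_fact: "k \<le> n \<Longrightarrow> fact (2*Suc n) * cc n k = fact (2*n+1-k) * real (Suc n choose (n - k))"
proof -
  assume k: "k \<le> n"
  have "real (Suc n choose (n - k)) = fact (Suc n) / (fact (n - k) * fact (Suc n - (n - k)))"
    using k by (intro binomial_fact) simp
  also have "Suc n - (n - k) = k + 1" using k by simp
  finally have b: "real (Suc n choose (n - k)) = fact (Suc n) / (fact (n - k) * fact (k + 1))" .
  have f1: "fact (2*Suc n) = real (2*n+2) * fact (2*n+1)" by (simp add: fact_Suc algebra_simps)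
  have f2: "fact (Suc n) = real (n+1) * (fact n :: real)" by (simp add: fact_Suc algebra_simps)
  have aux: "\<And>F A B X Y::real. F \<noteq> 0 \<Longrightarrow> A \<noteq> 0 \<Longrightarrow> B \<noteq> 0 \<Longrightarrow>
     real(2*n+2) * F * (X / (A*B) * (Y / (2*F))) = Y * (real(n+1) * X/(A*B))"
    by (simp add: field_simps)
  have "fact (2*Suc n) * cc n k = real(2*n+2) * fact(2*n+1) * (fact n / (fact (n-k) * fact (k+1)) * (fact (2*n+1-k) / (2 * fact (2*n+1))))"
    by (simp only: cc_def f1)
  also have "\<dots> = fact (2*n+1-k) * (real(n+1) * fact n / (fact (n-k) * fact (k+1)))"
    by (rule aux) simp_all
  finally show ?thesis unfolding b f2 by simp
qed


lemma HH_diff: "HH n s 0 - HH n s s = fact (2*Suc n) * Qn n s"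
proof -
  define K where "K = 2 * Suc n"
  define N where "N = Suc n"
  define F where "F j = (-1)^j * (fact j * coeff (PP s n) j * aa (K-1-j) 0)
       - (-1)^j * (fact j * coeff (monom 1 N * [:s,1:]^N) j * gg (K-1-j) s)" for j
  have "HH n s 0 - HH n s s = (\<Sum>j<K. F j)"
    unfolding HH_def K_def[symmetric] sum_subtractf[symmetric] F_def
    by (intro sum.cong refl) (simp add: poly_hpd_0 poly_hpd_s PP_shift gg_0 N_def)
  also have "\<dots> = (\<Sum>j\<in>{N..<K}. F j)"
    by (rule sum.mono_neutral_right) (auto simp: F_def coeff_PP coeff_monom_mult N_def K_def)
  also have "\<dots> = (\<Sum>k\<le>n. F (2*n+1-k))"
    by (rule sum.reindex_bij_witness[where i="\<lambda>k. 2*n+1-k" and j="\<lambda>j. 2*n+1-j"])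
       (auto simp: N_def K_def)
  also have "\<dots> = (\<Sum>k\<le>n. fact K * (cc n k * s^(k+1) * (aa k 0 + (-1)^k * poly (pp k) s * exp (-(s\<^sup>2)))))"
  proof (rule sum.cong[OF refl])
    fix k assume "k \<in> {..n}"
    then have k: "k \<le> n" by simp
    define j where "j = 2*n+1-k"
    have jN: "\<not> j < N" "j - N = n - k" "K - 1 - j = k" "N - (n - k) = k + 1" using k by (auto simp: j_def N_def K_def)
    have c1: "coeff (PP s n) j = real (N choose (n-k)) * (-s)^(k+1)"
      unfolding coeff_PP N_def[symmetric] using jN k
      by (simp del: power_Suc add: coeff_linear_poly_power N_def)
    have c2: "coeff (monom 1 N * [:s,1:]^N) j = real (N choose (n-k)) * s^(k+1)"
      unfolding coeff_monom_mult using jN k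
      by (simp del: power_Suc add: coeff_linear_poly_power N_def)
    have m1: "(-1::real)^j = - ((-1)^k)"
      unfolding j_def using k by (simp add: minus_one_pow_diff)
    have m2: "(-s)^(k+1) = - ((-1)^k * s^(k+1))" by (simp add: power_minus[of s])
    have mm: "(-1::real)^k * (-1)^k = 1" by (simp add: power_add[symmetric] flip: power_mult_distrib)
    have cf: "fact K * cc n k = fact j * real (N choose (n-k))"
      unfolding K_def j_def N_def using cc_fact[OF k] by simp
    have "F j = (fact j * real (N choose (n-k))) * s^(k+1) * (((-1)^k * (-1)^k) * aa k 0 + (-1)^k * gg k s)"
      unfolding F_def c1 c2 m1 m2 jN by (simp add: algebra_simps)
    also have "\<dots> = fact K * (cc n k * s^(k+1) * (aa k 0 + (-1)^k * poly (pp k) s * exp (-(s\<^sup>2))))"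
      unfolding mm cf[symmetric] gg_def by (simp add: algebra_simps)
    finally show "F (2*n+1-k) = fact K * (cc n k * s^(k+1) * (aa k 0 + (-1)^k * poly (pp k) s * exp (-(s\<^sup>2))))"
      unfolding j_def .
  qed
  also have "\<dots> = fact K * Qn n s" unfolding Qn_def sum_distrib_left ..
  finally show ?thesis unfolding K_def .
qed


fun cpp :: "nat \<Rightarrow> complex poly" where
  "cpp 0 = 1"
| "cpp (Suc k) = pderiv (cpp k) - [:0, 2:] * cpp k"

lemma coeff_cpp: "coeff (cpp k) j = of_real (coeff (pp k) j)"
proof (induction k arbitrary: j)
  case 0 then show ?case by (cases j) auto
next
  case (Suc k)
  have "coeff (cpp (Suc k)) j = of_nat (Suc j) * coeff (cpp k) (Suc j) - (if j = 0 then 0 else 2 * coeff (cpp k) (j - 1))"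
    by (cases j) (auto simp: coeff_pderiv coeff_pCons)
  moreover have "coeff (pp (Suc k)) j = of_nat (Suc j) * coeff (pp k) (Suc j) - (if j = 0 then 0 else 2 * coeff (pp k) (j - 1))"
    by (cases j) (auto simp: coeff_pderiv coeff_pCons)
  ultimately show ?case using Suc.IH by simp
qed

lemma cpp_map: "cpp k = map_poly of_real (pp k)"
  by (rule poly_eqI) (simp add: coeff_cpp coeff_map_poly)

lemma poly_map_of_real: "poly (map_poly of_real p) (of_real x) = (of_real (poly p x) :: complex)"
  by (induction p) (auto simp: map_poly_pCons)

lemma poly_cpp: "poly (cpp k) (of_real x) = of_real (poly (pp k) x)"
  unfolding cpp_map by (rule poly_map_of_real)

lemma deriv_gauss: "(deriv^^k) (\<lambda>z::complex. exp (-(z\<^sup>2))) = (\<lambda>z. poly (cpp k) z * exp (-(z\<^sup>2)))"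
proof (induction k)
  case 0 then show ?case by simp
next
  case (Suc k)
  have "deriv (\<lambda>z. poly (cpp k) z * exp (-(z\<^sup>2))) = (\<lambda>z. poly (cpp (Suc k)) z * exp (-(z\<^sup>2)))"
  proof
    fix z :: complex
    have "((\<lambda>z. poly (cpp k) z * exp (-(z\<^sup>2))) has_field_derivative
       poly (pderiv (cpp k)) z * exp (-(z\<^sup>2)) + poly (cpp k) z * (exp (-(z\<^sup>2)) * (- 2 * z))) (at z)"
      by (auto intro!: derivative_eq_intros)
    moreover have "poly (pderiv (cpp k)) z * exp (-(z\<^sup>2)) + poly (cpp k) z * (exp (-(z\<^sup>2)) * (- 2 * z))
        = poly (cpp (Suc k)) z * exp (-(z\<^sup>2))"
      by (simp add: algebra_simps)
    ultimately show "deriv (\<lambda>z. poly (cpp k) z * exp (-(z\<^sup>2))) z = poly (cpp (Suc k)) z * exp (-(z\<^sup>2))"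
      by (metis DERIV_imp_deriv)
  qed
  then show ?case using Suc.IH by simp
qed

lemma gg_bound:
  assumes r: "r > 0"
  shows "\<bar>gg k t\<bar> \<le> fact k * exp (r\<^sup>2) / r^k"
proof -
  let ?f = "\<lambda>z::complex. exp (-(z\<^sup>2))"
  have "norm ((deriv^^k) ?f (of_real t)) \<le> fact k * exp (r\<^sup>2) / r^k"
  proof (rule Cauchy_inequality)
    show "?f holomorphic_on ball (of_real t) r" by (intro holomorphic_intros)
    show "continuous_on (cball (of_real t) r) ?f" by (intro continuous_intros)
    show "0 < r" by (rule r)
    fix x :: complex assume "norm (of_real t - x) = r"
    then have "\<bar>Im x\<bar> \<le> r" using abs_Im_le_cmod[of "of_real t - x"] by simp
    then have "(Im x)\<^sup>2 \<le> r\<^sup>2" by (metis abs_le_square_iff abs_of_pos r)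
    moreover have "Re (-(x\<^sup>2)) = (Im x)\<^sup>2 - (Re x)\<^sup>2" by (simp add: power2_eq_square)
    ultimately have "Re (-(x\<^sup>2)) \<le> r\<^sup>2" by (smt (verit) zero_le_power2)
    then show "norm (?f x) \<le> exp (r\<^sup>2)" by simp
  qed
  moreover have "(deriv^^k) ?f (of_real t) = of_real (gg k t)"
    unfolding deriv_gauss gg_def poly_cpp by (simp flip: exp_of_real)
  ultimately show ?thesis by simp
qed


lemma bound_mvt:
  fixes f h f' h' :: "real \<Rightarrow> real"
  assumes ab: "a \<le> b" and cf: "continuous_on {a..b} f" and ch: "continuous_on {a..b} h"
    and d: "\<And>x. a < x \<Longrightarrow> x < b \<Longrightarrow> (f has_real_derivative f' x) (at x) \<and> (h has_real_derivative h' x) (at x) \<and> \<bar>f' x\<bar> \<le> h' x"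
  shows "\<bar>f b - f a\<bar> \<le> h b - h a"
proof -
  have "(\<lambda>x. h x - f x) a \<le> (\<lambda>x. h x - f x) b"
  proof (rule DERIV_nonneg_imp_increasing_open[OF ab])
    fix x assume "a < x" "x < b"
    with d[of x] have "(f has_real_derivative f' x) (at x)" "(h has_real_derivative h' x) (at x)" "\<bar>f' x\<bar> \<le> h' x"
      by auto
    then show "\<exists>y. ((\<lambda>x. h x - f x) has_real_derivative y) (at x) \<and> y \<ge> 0"
      by (intro exI[of _ "h' x - f' x"] conjI DERIV_diff) auto
  next
    show "continuous_on {a..b} (\<lambda>x. h x - f x)" using cf ch by (intro continuous_intros)
  qed
  moreover have "(\<lambda>x. h x + f x) a \<le> (\<lambda>x. h x + f x) b"
  proof (rule DERIV_nonneg_imp_increasing_open[OF ab])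
    fix x assume "a < x" "x < b"
    with d[of x] have "(f has_real_derivative f' x) (at x)" "(h has_real_derivative h' x) (at x)" "\<bar>f' x\<bar> \<le> h' x"
      by auto
    then show "\<exists>y. ((\<lambda>x. h x + f x) has_real_derivative y) (at x) \<and> y \<ge> 0"
      by (intro exI[of _ "h' x + f' x"] conjI DERIV_add) auto
  next
    show "continuous_on {a..b} (\<lambda>x. h x + f x)" using cf ch by (intro continuous_intros)
  qed
  ultimately show ?thesis by simp
qed

definition Gi :: "real \<Rightarrow> real" where
  "Gi x = integral {0..x} (\<lambda>t. exp (-(t\<^sup>2)))"

lemma Gi_0: "Gi 0 = 0" by (simp add: Gi_def)

lemma Gi_cont: "continuous_on {0..s} Gi"
  unfolding Gi_def[abs_def]
  by (intro indefinite_integral_continuous_1 integrable_continuous_interval continuous_intros)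

lemma Gi_deriv: assumes "t > 0" shows "(Gi has_real_derivative exp (-(t\<^sup>2))) (at t)"
proof -
  have "(Gi has_real_derivative exp (-(t\<^sup>2))) (at t within {0..t+1})"
    unfolding Gi_def[abs_def] using assms
    by (intro integral_has_real_derivative continuous_intros) auto
  moreover have "t \<in> interior {0..t+1}" using assms by simp
  ultimately show ?thesis by (metis at_within_interior)
qed

lemma Gi_nonneg: "Gi s \<ge> 0"
proof -
  have "(\<lambda>t. exp (-(t\<^sup>2))) integrable_on {0..s}"
    by (intro integrable_continuous_interval continuous_intros)
  then show ?thesis unfolding Gi_def by (rule integral_nonneg) simp
qed

lemma erf_Gi: "erf x = 2 / sqrt pi * Gi x" by (simp add: erf_def Gi_def)

lemma poly_PP_bound:
  assumes "0 \<le> t" "t \<le> s"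
  shows "\<bar>poly (PP s n) t\<bar> \<le> (s\<^sup>2/4)^Suc n"
proof -
  have e: "poly (PP s n) t = t^Suc n * (t - s)^Suc n" by (simp add: PP_def poly_monom del: power_Suc)
  have a1: "\<bar>t\<bar> = t" "\<bar>t - s\<bar> = s - t" using assms by auto
  have "\<bar>poly (PP s n) t\<bar> = (t * (s - t))^Suc n"
    unfolding e abs_mult power_abs a1 power_mult_distrib ..
  also have "\<dots> \<le> (s\<^sup>2/4)^Suc n"
  proof (rule power_mono)
    show "t * (s - t) \<le> s\<^sup>2/4" using sum_squares_ge_zero[of "s - 2*t" 0]
      by (simp add: power2_eq_square algebra_simps)
    show "0 \<le> t * (s - t)" using assms by simp
  qed
  finally show ?thesis .
qed

lemma err_bound:
  assumes s: "s \<ge> 0"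
  shows "\<bar>Gi s - Qn n s\<bar> \<le> s * (s\<^sup>2/4)^Suc n * exp (real (Suc n)) / real (Suc n)^Suc n"
proof -
  define K where "K = 2 * Suc n"
  define N where "N = Suc n"
  define B where "B = (s\<^sup>2/4)^N * (fact K * exp (real N) / real N ^ N)"
  define \<Phi> where "\<Phi> t = HH n s t + fact K * Gi t" for t
  have gK: "\<bar>gg K t\<bar> \<le> fact K * exp (real N) / real N ^ N" for t
  proof -
    have "\<bar>gg K t\<bar> \<le> fact K * exp ((sqrt (real N))\<^sup>2) / sqrt (real N) ^ K"
      by (rule gg_bound) (simp add: N_def)
    also have "sqrt (real N) ^ K = real N ^ N"
      unfolding K_def N_def[symmetric] by (simp add: power_mult)
    finally show ?thesis by simp
  qed
  have "\<bar>\<Phi> s - \<Phi> 0\<bar> \<le> B * s - B * 0"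
  proof (rule bound_mvt[OF s])
    show "continuous_on {0..s} \<Phi>" unfolding \<Phi>_def
    proof -
      have hc: "continuous_on {0..s} (HH n s)"
        by (rule continuous_at_imp_continuous_on) (use HH_deriv DERIV_isCont in blast)
      show "continuous_on {0..s} (\<lambda>t. HH n s t + fact K * Gi t)"
        using hc Gi_cont by (intro continuous_intros) auto
    qed
    show "continuous_on {0..s} (\<lambda>t. B * t)" by (intro continuous_intros)
    fix t assume t: "0 < t" "t < s"
    have "(\<Phi> has_real_derivative (poly (PP s n) t * gg K t - fact K * gg 0 t + fact K * exp (-(t\<^sup>2)))) (at t)"
      unfolding \<Phi>_def[abs_def] K_def using HH_deriv Gi_deriv t
      by (auto intro!: derivative_eq_intros)
    moreover have "poly (PP s n) t * gg K t - fact K * gg 0 t + fact K * exp (-(t\<^sup>2)) = poly (PP s n) t * gg K t"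
      by (simp add: gg_def)
    moreover have "\<bar>poly (PP s n) t * gg K t\<bar> \<le> B"
    proof -
      have "\<bar>poly (PP s n) t * gg K t\<bar> = \<bar>poly (PP s n) t\<bar> * \<bar>gg K t\<bar>" by (simp add: abs_mult)
      also have "\<dots> \<le> (s\<^sup>2/4)^N * (fact K * exp (real N) / real N ^ N)"
        using poly_PP_bound[of t s n] t gK[of t] unfolding N_def
        by (intro mult_mono) auto
      finally show ?thesis unfolding B_def .
    qed
    moreover have "((\<lambda>t. B * t) has_real_derivative B) (at t)" by (auto intro!: derivative_eq_intros)
    ultimately show "(\<Phi> has_real_derivative (poly (PP s n) t * gg K t)) (at t) \<and>
       ((\<lambda>t. B * t) has_real_derivative B) (at t) \<and> \<bar>poly (PP s n) t * gg K t\<bar> \<le> B"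
      by simp
  qed
  moreover have "\<Phi> s - \<Phi> 0 = fact K * (Gi s - Qn n s)"
    unfolding \<Phi>_def Gi_0 using HH_diff[of n s] unfolding K_def by (simp add: algebra_simps)
  ultimately have "fact K * \<bar>Gi s - Qn n s\<bar> \<le> B * s" by (simp add: abs_mult)
  then have "\<bar>Gi s - Qn n s\<bar> \<le> B * s / fact K" by (simp add: field_simps)
  also have "B * s / fact K = s * (s\<^sup>2/4)^N * exp (real N) / real N ^ N"
    unfolding B_def by (simp add: field_simps)
  finally show ?thesis unfolding N_def .
qed


lemma weight:
  assumes s: "s \<ge> 0"
  shows "exp (-(s\<^sup>2)) * (s * (s\<^sup>2/4)^Suc n * exp (real (Suc n)) / real (Suc n)^Suc n)
         \<le> s * exp (-(s\<^sup>2)/4) * (1/3)^Suc n"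
proof -
  define N where "N = real (Suc n)"
  have N: "N > 0" by (simp add: N_def)
  define v where "v = 3 * s\<^sup>2 / (4 * N)"
  have v: "v \<ge> 0" using N by (simp add: v_def)
  have "v \<le> exp (v - 1)" using exp_ge_add_one_self[of "v - 1"] by simp
  then have "v * exp (1 - v) \<le> exp (v - 1) * exp (1 - v)" using v by (intro mult_right_mono) auto
  also have "\<dots> = 1" by (simp flip: exp_add)
  finally have core0: "v * exp (1 - v) \<le> 1" .
  have core: "(s\<^sup>2/4) / N * exp 1 * exp (-(3 * s\<^sup>2 / (4 * N))) \<le> 1/3"
  proof -
    have e1: "(s\<^sup>2/4) / N = v / 3" using N by (simp add: v_def field_simps)
    have e2: "exp 1 * exp (-(3 * s\<^sup>2 / (4 * N))) = exp (1 - v)"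
      by (simp add: v_def flip: exp_add)
    have "(s\<^sup>2/4) / N * exp 1 * exp (-(3 * s\<^sup>2 / (4 * N))) = (v / 3) * (exp 1 * exp (-(3 * s\<^sup>2 / (4 * N))))"
      unfolding e1 by (simp only: mult.assoc)
    also have "\<dots> = (v * exp (1 - v)) / 3" unfolding e2 by simp
    also have "\<dots> \<le> 1/3" using core0 by simp
    finally show ?thesis .
  qed
  have "((s\<^sup>2/4) / N * exp 1 * exp (-(3 * s\<^sup>2 / (4 * N))))^Suc n \<le> (1/3)^Suc n"
    using core N by (intro power_mono) auto
  moreover have "((s\<^sup>2/4) / N * exp 1 * exp (-(3 * s\<^sup>2 / (4 * N))))^Suc n
      = (s\<^sup>2/4)^Suc n / N^Suc n * exp N * exp (-(3 * s\<^sup>2/4))"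
  proof -
    have x1: "exp 1 ^ Suc n = exp N" using exp_of_nat_mult[of "Suc n" "1::real"] by (simp add: N_def)
    have x2: "exp (-(3 * s\<^sup>2 / (4 * N))) ^ Suc n = exp (-(3 * s\<^sup>2/4))"
    proof -
      have m: "real (Suc n) * (-(3 * s\<^sup>2 / (4 * N))) = -(3 * s\<^sup>2/4)" using N unfolding N_def[symmetric] by (simp add: field_simps)
      have "exp (-(3 * s\<^sup>2 / (4 * N))) ^ Suc n = exp (real (Suc n) * (-(3 * s\<^sup>2 / (4 * N))))"
        by (simp only: exp_of_nat_mult)
      also have "\<dots> = exp (-(3 * s\<^sup>2/4))" by (simp only: m)
      finally show ?thesis .
    qed
    show ?thesis by (simp only: power_mult_distrib power_divide x1 x2)
  qed
  ultimately have B: "(s\<^sup>2/4)^Suc n / N^Suc n * exp N * exp (-(3 * s\<^sup>2/4)) \<le> (1/3)^Suc n" by simp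
  have "exp (-(s\<^sup>2)) = exp (-(s\<^sup>2)/4) * exp (-(3 * s\<^sup>2/4))" by (simp flip: exp_add)
  then have "exp (-(s\<^sup>2)) * (s * (s\<^sup>2/4)^Suc n * exp N / N^Suc n)
      = s * exp (-(s\<^sup>2)/4) * ((s\<^sup>2/4)^Suc n / N^Suc n * exp N * exp (-(3 * s\<^sup>2/4)))"
    by (simp add: field_simps)
  also have "\<dots> \<le> s * exp (-(s\<^sup>2)/4) * (1/3)^Suc n"
    using B s by (intro mult_left_mono) auto
  finally show ?thesis unfolding N_def .
qed


lemma D_bound:
  assumes x: "x \<ge> 0"
  shows "\<bar>inner n x - (erf x)\<^sup>2\<bar> \<le> 16/pi * (1/3)^Suc n"
proof -
  define c where "c = (1/3::real)^Suc n"
  have c: "c \<ge> 0" by (simp add: c_def)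
  define D where "D t = inner n t - 4/pi * (Gi t)\<^sup>2" for t
  define h where "h t = -(16/pi) * c * exp (-(t\<^sup>2)/4)" for t
  have erf2: "(erf t)\<^sup>2 = 4/pi * (Gi t)\<^sup>2" for t
    unfolding erf_Gi by (simp add: power_mult_distrib power_divide)
  have "\<bar>D x - D 0\<bar> \<le> h x - h 0"
  proof (rule bound_mvt[OF x, where f' = "\<lambda>t. 8/pi * exp (-(t\<^sup>2)) * (Qn n t - Gi t)"
                                and h' = "\<lambda>t. 8/pi * c * (t * exp (-(t\<^sup>2)/4))"])
    have ic: "continuous_on {0..x} (inner n)"
      by (rule continuous_at_imp_continuous_on) (use inner_deriv DERIV_isCont in blast)
    show "continuous_on {0..x} D" unfolding D_def[abs_def]
      using ic Gi_cont by (intro continuous_intros) auto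
    show "continuous_on {0..x} h" unfolding h_def[abs_def] by (intro continuous_intros) auto
    fix t assume t: "0 < t" "t < x"
    have "(D has_real_derivative (8/pi * exp(-(t\<^sup>2)) * Qn n t - 4/pi * (2 * Gi t * exp (-(t\<^sup>2))))) (at t)"
      unfolding D_def[abs_def] using t
      by (intro DERIV_diff inner_deriv DERIV_cmult) (auto intro!: derivative_eq_intros Gi_deriv)
    moreover have "8/pi * exp(-(t\<^sup>2)) * Qn n t - 4/pi * (2 * Gi t * exp (-(t\<^sup>2))) = 8/pi * exp (-(t\<^sup>2)) * (Qn n t - Gi t)"
      by (simp add: field_simps)
    moreover have "(h has_real_derivative 8/pi * c * (t * exp (-(t\<^sup>2)/4))) (at t)"
    proof -
      have "(h has_real_derivative -(16/pi) * c * (exp (-(t\<^sup>2)/4) * (-(2 * t) / 4))) (at t)"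
        unfolding h_def[abs_def] by (auto intro!: derivative_eq_intros)
      moreover have "-(16/pi) * c * (exp (-(t\<^sup>2)/4) * (-(2 * t) / 4)) = 8/pi * c * (t * exp (-(t\<^sup>2)/4))"
        by (simp add: field_simps)
      ultimately show ?thesis by metis
    qed
    moreover have "\<bar>8/pi * exp (-(t\<^sup>2)) * (Qn n t - Gi t)\<bar> \<le> 8/pi * c * (t * exp (-(t\<^sup>2)/4))"
    proof -
      have "\<bar>8/pi * exp (-(t\<^sup>2)) * (Qn n t - Gi t)\<bar> = 8/pi * (exp (-(t\<^sup>2)) * \<bar>Gi t - Qn n t\<bar>)"
        by (simp add: abs_mult abs_minus_commute)
      also have "\<dots> \<le> 8/pi * (exp (-(t\<^sup>2)) * (t * (t\<^sup>2/4)^Suc n * exp (real (Suc n)) / real (Suc n)^Suc n))"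
        using err_bound[of t n] t by (intro mult_left_mono) auto
      also have "\<dots> \<le> 8/pi * (t * exp (-(t\<^sup>2)/4) * c)"
        using weight[of t n] t unfolding c_def by (intro mult_left_mono) auto
      finally show ?thesis by (simp add: algebra_simps)
    qed
    ultimately show "(D has_real_derivative 8/pi * exp (-(t\<^sup>2)) * (Qn n t - Gi t)) (at t) \<and>
        (h has_real_derivative 8/pi * c * (t * exp (-(t\<^sup>2)/4))) (at t) \<and>
        \<bar>8/pi * exp (-(t\<^sup>2)) * (Qn n t - Gi t)\<bar> \<le> 8/pi * c * (t * exp (-(t\<^sup>2)/4))"
      by simp
  qed
  moreover have "D 0 = 0" unfolding D_def by (simp add: inner_0 Gi_0)
  moreover have "h x - h 0 \<le> 16/pi * c"
    unfolding h_def using c by (simp add: algebra_simps)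
  moreover have "D x = inner n x - (erf x)\<^sup>2" unfolding D_def erf2 ..
  ultimately show ?thesis unfolding c_def by simp
qed

lemma sqrt_diff_bound:
  fixes a b :: real
  assumes b: "b \<ge> 0"
  shows "\<bar>sqrt a - sqrt b\<bar> \<le> sqrt (2 * \<bar>a - b\<bar>)"
proof -
  define y where "y = sqrt b"
  have y: "y \<ge> 0" "y\<^sup>2 = b" using b by (auto simp: y_def)
  have sq: "(sqrt a - sqrt b)\<^sup>2 \<le> 2 * \<bar>a - b\<bar>"
  proof (cases "a \<ge> 0")
    case True
    define x where "x = sqrt a"
    have xx: "x \<ge> 0" "x\<^sup>2 = a" using True by (auto simp: x_def)
    have "(x - y)\<^sup>2 \<le> \<bar>x\<^sup>2 - y\<^sup>2\<bar>"
    proof -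
      have "(x - y)\<^sup>2 = \<bar>x - y\<bar> * \<bar>x - y\<bar>" by (simp add: power2_eq_square abs_mult_self_eq)
      also have "\<dots> \<le> \<bar>x - y\<bar> * (x + y)" using xx y by (intro mult_left_mono) auto
      also have "\<dots> = \<bar>(x - y) * (x + y)\<bar>" using xx y by (simp add: abs_mult)
      also have "\<dots> = \<bar>x\<^sup>2 - y\<^sup>2\<bar>" by (simp add: power2_eq_square algebra_simps)
      finally show ?thesis .
    qed
    then have "(sqrt a - sqrt b)\<^sup>2 \<le> \<bar>a - b\<bar>" using xx y unfolding x_def y_def by simp
    then show ?thesis by (rule order_trans) simp
  next
    case False
    define x where "x = sqrt (-a)"
    have xx1: "x\<^sup>2 = -a" unfolding x_def using False by (intro real_sqrt_pow2) simp
    have xx3: "sqrt a = -x" unfolding x_def by (simp add: real_sqrt_minus)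
    have xx: "x \<ge> 0" "x\<^sup>2 = -a" "sqrt a = -x" using False xx1 xx3 by (auto simp: x_def)
    have "(-x - y)\<^sup>2 \<le> 2 * (x\<^sup>2 + y\<^sup>2)" using sum_squares_ge_zero[of "x - y" 0]
      by (simp add: power2_eq_square algebra_simps)
    then show ?thesis using xx y False unfolding y_def by simp
  qed
  have "\<bar>sqrt a - sqrt b\<bar> = sqrt ((sqrt a - sqrt b)\<^sup>2)" by simp
  also have "\<dots> \<le> sqrt (2 * \<bar>a - b\<bar>)" using sq by (rule real_sqrt_le_mono)
  finally show ?thesis .
qed

lemma erf_nonneg: "erf x \<ge> 0"
  unfolding erf_Gi using Gi_nonneg by simp

theorem theorem6p1:
  shows "(\<forall>x::real. x \<ge> 0 \<longrightarrow> (\<lambda>n. f_n n x) \<longlonglongrightarrow> erf x)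
         \<and> uniform_limit {0::real..} f_n erf sequentially"
proof -
  define bnd where "bnd n = sqrt (2 * (16/pi * (1/3::real)^Suc n))" for n
  have fb: "\<bar>f_n n x - erf x\<bar> \<le> bnd n" if x: "x \<ge> 0" for n x
  proof -
    have "erf x = sqrt ((erf x)\<^sup>2)" using erf_nonneg by simp
    moreover have "f_n n x = sqrt (inner n x)" unfolding f_n_def inner_def ..
    ultimately have "\<bar>f_n n x - erf x\<bar> \<le> sqrt (2 * \<bar>inner n x - (erf x)\<^sup>2\<bar>)"
      using sqrt_diff_bound[of "(erf x)\<^sup>2" "inner n x"] by simp
    also have "\<dots> \<le> bnd n" unfolding bnd_def using D_bound[OF x, of n]
      by (intro real_sqrt_le_mono) simp
    finally show ?thesis .
  qed
  have "bnd \<longlonglongrightarrow> sqrt (2 * (16/pi * 0))"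
    unfolding bnd_def
    by (intro tendsto_intros LIMSEQ_power_zero[THEN LIMSEQ_Suc]) simp
  then have bl: "bnd \<longlonglongrightarrow> 0" by simp
  have U: "uniform_limit {0::real..} f_n erf sequentially"
  proof (rule uniform_limitI)
    fix e :: real assume e: "e > 0"
    have "eventually (\<lambda>n. bnd n < e) sequentially" using order_tendstoD(2)[OF bl e] .
    then show "\<forall>\<^sub>F n in sequentially. \<forall>x\<in>{0..}. dist (f_n n x) (erf x) < e"
    proof (rule eventually_mono)
      fix n assume "bnd n < e"
      then show "\<forall>x\<in>{0..}. dist (f_n n x) (erf x) < e"
        using fb[of _ n] by (auto simp: dist_real_def intro: le_less_trans)
    qed
  qed
  moreover have "\<forall>x::real. x \<ge> 0 \<longrightarrow> (\<lambda>n. f_n n x) \<longlonglongrightarrow> erf x"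
    using tendsto_uniform_limitI[OF U] by simp
  ultimately show ?thesis by simp
qed

end
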